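(* Fix $a\in[0,\infty)$. For a function $O:[0,1]^2\to[0,1]$ the following are equivalent: (1) There exist a continuous and strictly decreasing function $\theta:[0,1]\to[0,\infty]$ and a continuous and decreasing function $\vartheta:[0,\infty]\to[0,1]$ such that $O(x,y)=\vartheta(\theta(x)+\theta(y))$ for all $x,y$, $O$ is an overlap function, and at least one of the following holds: (a) $\theta(x)=\frac{a}{2}$ if and only if $x=1$; (b) $\vartheta(x)=1$ if and only if $x\in[0,a]$. (2) $O$ is an overlap function and there exist a pseudo automorphism $\mathcal{F}$ and a strict t-norm $T$ with $O(x,y)=\mathcal{F}(T(x,y))$ for all $(x,y)\in[0,1]^2$. (3) There exist a strictly increasing bijection $\varphi:[0,1]\to[0,1]$ and a pseudo automorphism $\mathcal{H}$ such that $O(x,y)=\mathcal{H}(\varphi(x)\varphi(y))$ for all $(x,y)\in[0,1]^2$.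
   Context: "Decreasing" means non-increasing and "increasing" means non-decreasing. Arithmetic in $[0,\infty]$ uses $c+\infty=\infty$; continuity on $[0,\infty]$ refers to the usual topology of the extended half-line. An overlap function is a map $O:[0,1]^2\to[0,1]$ that is (O1) commutative, (O2) $O(x,y)=0$ iff $xy=0$, (O3) $O(x,y)=1$ iff $xy=1$, (O4) increasing in each variable, (O5) continuous. A pseudo automorphism is a continuous increasing map $\mathcal{F}:[0,1]\to[0,1]$ with $\mathcal{F}(x)=1$ iff $x=1$ and $\mathcal{F}(x)=0$ iff $x=0$. A t-norm is a commutative, associative map $T:[0,1]^2\to[0,1]$, increasing in each variable, with $T(x,1)=x$; it is strict if it is continuous and strictly increasing on $(0,1]^2$ (i.e. $T(x,y)<T(x',y)$ whenever $y>0$ and $x<x'$). *)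

theory Defs
  imports "HOL-Analysis.Analysis" "HOL-Library.Extended_Nonnegative_Real"
begin

text \<open>Functions on the unit interval/square are total HOL functions whose
 behaviour is only constrained on [0,1] resp. [0,1]^2. The extended half-line
 [0,\<infinity>] is the type ennreal.\<close>

definition overlap :: "(real \<Rightarrow> real \<Rightarrow> real) \<Rightarrow> bool" where
  "overlap Ov \<longleftrightarrow>
     (\<forall>x\<in>{0..1}. \<forall>y\<in>{0..1}. Ov x y \<in> {0..1}) \<and>
     (\<forall>x\<in>{0..1}. \<forall>y\<in>{0..1}. Ov x y = Ov y x) \<and>
     (\<forall>x\<in>{0..1}. \<forall>y\<in>{0..1}. Ov x y = 0 \<longleftrightarrow> x * y = 0) \<and>
     (\<forall>x\<in>{0..1}. \<forall>y\<in>{0..1}. Ov x y = 1 \<longleftrightarrow> x * y = 1) \<and>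
     (\<forall>x\<in>{0..1}. \<forall>x'\<in>{0..1}. \<forall>y\<in>{0..1}. x \<le> x' \<longrightarrow> Ov x y \<le> Ov x' y \<and> Ov y x \<le> Ov y x') \<and>
     continuous_on ({0..1} \<times> {0..1}) (\<lambda>(x, y). Ov x y)"

definition pseudo_automorphism :: "(real \<Rightarrow> real) \<Rightarrow> bool" where
  "pseudo_automorphism F \<longleftrightarrow>
     (\<forall>x\<in>{0..1}. F x \<in> {0..1}) \<and>
     continuous_on {0..1} F \<and> mono_on {0..1} F \<and>
     (\<forall>x\<in>{0..1}. F x = 1 \<longleftrightarrow> x = 1) \<and>
     (\<forall>x\<in>{0..1}. F x = 0 \<longleftrightarrow> x = 0)"

definition tnorm :: "(real \<Rightarrow> real \<Rightarrow> real) \<Rightarrow> bool" where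
  "tnorm T \<longleftrightarrow>
     (\<forall>x\<in>{0..1}. \<forall>y\<in>{0..1}. T x y \<in> {0..1}) \<and>
     (\<forall>x\<in>{0..1}. \<forall>y\<in>{0..1}. T x y = T y x) \<and>
     (\<forall>x\<in>{0..1}. \<forall>y\<in>{0..1}. \<forall>z\<in>{0..1}. T x (T y z) = T (T x y) z) \<and>
     (\<forall>x\<in>{0..1}. \<forall>x'\<in>{0..1}. \<forall>y\<in>{0..1}. x \<le> x' \<longrightarrow> T x y \<le> T x' y \<and> T y x \<le> T y x') \<and>
     (\<forall>x\<in>{0..1}. T x 1 = x)"

definition strict_tnorm :: "(real \<Rightarrow> real \<Rightarrow> real) \<Rightarrow> bool" where
  "strict_tnorm T \<longleftrightarrow> tnorm T \<and>
     continuous_on ({0..1} \<times> {0..1}) (\<lambda>(x, y). T x y) \<and>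
     (\<forall>x\<in>{0..1}. \<forall>x'\<in>{0..1}. \<forall>y\<in>{0..1}. 0 < y \<longrightarrow> x < x' \<longrightarrow> T x y < T x' y)"

end

theory Submission
  imports Defs
begin

lemma mono_interval_cont:
  fixes f :: "'a::linorder_topology \<Rightarrow> 'b::{linorder_topology, dense_linorder}"
  assumes mono: "\<And>x y. x\<in>S \<Longrightarrow> y\<in>S \<Longrightarrow> x \<le> y \<Longrightarrow> f x \<le> f y"
  and iv: "\<And>u v w. u \<in> f`S \<Longrightarrow> v \<in> f`S \<Longrightarrow> u \<le> w \<Longrightarrow> w \<le> v \<Longrightarrow> w \<in> f`S"
  shows "continuous_on S f"
proof -
  have inS: "eventually (\<lambda>y. y \<in> S) (at x within S)" for x
    by (simp add: eventually_at_filter)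
  have "(f \<longlongrightarrow> f x) (at x within S)" if x: "x \<in> S" for x
  proof (rule order_tendstoI)
    fix c assume c: "c < f x"
    show "eventually (\<lambda>y. c < f y) (at x within S)"
    proof (cases "\<exists>v\<in>f`S. v \<le> c")
      case True
      then obtain v where v: "v\<in>f`S" "v \<le> c" by blast
      obtain w where w: "c < w" "w < f x" using dense[OF c] by blast
      then have "w \<in> f`S" using iv[OF v(1), of "f x" w] x v(2) by auto
      then obtain x1 where x1: "x1\<in>S" "w = f x1" by auto
      have "x1 < x"
      proof (rule ccontr)
        assume "\<not> x1 < x" then have "f x \<le> f x1" using mono[OF x x1(1)] by auto
        then show False using w x1 by auto
      qed
      have "eventually (\<lambda>y. x1 < y) (at x within S)"
        using order_tendstoD(1)[OF tendsto_ident_at \<open>x1 < x\<close>] .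
      from eventually_conj[OF this inS[of x]] show ?thesis
        by (rule eventually_mono) (metis less_imp_le mono x1 w order_less_le_trans)
    next
      case False
      from inS[of x] show ?thesis by (rule eventually_mono) (use False in \<open>auto simp: not_le\<close>)
    qed
  next
    fix c assume c: "f x < c"
    show "eventually (\<lambda>y. f y < c) (at x within S)"
    proof (cases "\<exists>v\<in>f`S. c \<le> v")
      case True
      then obtain v where v: "v\<in>f`S" "c \<le> v" by blast
      obtain w where w: "f x < w" "w < c" using dense[OF c] by blast
      then have "w \<in> f`S" using iv[of "f x" v w] v x by auto
      then obtain x1 where x1: "x1\<in>S" "w = f x1" by auto
      have "x < x1"
      proof (rule ccontr)
        assume "\<not> x < x1" then have "f x1 \<le> f x" using mono[OF x1(1) x] by auto
        then show False using w x1 by auto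
      qed
      have "eventually (\<lambda>y. y < x1) (at x within S)"
        using order_tendstoD(2)[OF tendsto_ident_at \<open>x < x1\<close>] .
      from eventually_conj[OF this inS[of x]] show ?thesis
        by (rule eventually_mono) (metis less_imp_le mono x1 w order_le_less_trans)
    next
      case False
      from inS[of x] show ?thesis by (rule eventually_mono) (use False in \<open>auto simp: not_le\<close>)
    qed
  qed
  then show ?thesis by (simp add: continuous_on_def)
qed

lemma antimono_interval_cont:
  fixes f :: "'a::linorder_topology \<Rightarrow> 'b::{linorder_topology, dense_linorder}"
  assumes mono: "\<And>x y. x\<in>S \<Longrightarrow> y\<in>S \<Longrightarrow> x \<le> y \<Longrightarrow> f y \<le> f x"
  and iv: "\<And>u v w. u \<in> f`S \<Longrightarrow> v \<in> f`S \<Longrightarrow> u \<le> w \<Longrightarrow> w \<le> v \<Longrightarrow> w \<in> f`S"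
  shows "continuous_on S f"
proof -
  have inS: "eventually (\<lambda>y. y \<in> S) (at x within S)" for x
    by (simp add: eventually_at_filter)
  have "(f \<longlongrightarrow> f x) (at x within S)" if x: "x \<in> S" for x
  proof (rule order_tendstoI)
    fix c assume c: "c < f x"
    show "eventually (\<lambda>y. c < f y) (at x within S)"
    proof (cases "\<exists>v\<in>f`S. v \<le> c")
      case True
      then obtain v where v: "v\<in>f`S" "v \<le> c" by blast
      obtain w where w: "c < w" "w < f x" using dense[OF c] by blast
      then have "w \<in> f`S" using iv[OF v(1), of "f x" w] x v(2) by auto
      then obtain x1 where x1: "x1\<in>S" "w = f x1" by auto
      have "x < x1"
      proof (rule ccontr)
        assume "\<not> x < x1" then have "f x \<le> f x1" using mono[OF x1(1) x] by auto
        then show False using w x1 by auto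
      qed
      have "eventually (\<lambda>y. y < x1) (at x within S)"
        using order_tendstoD(2)[OF tendsto_ident_at \<open>x < x1\<close>] .
      from eventually_conj[OF this inS[of x]] show ?thesis
        by (rule eventually_mono) (metis less_imp_le mono x1 w order_less_le_trans)
    next
      case False
      from inS[of x] show ?thesis by (rule eventually_mono) (use False in \<open>auto simp: not_le\<close>)
    qed
  next
    fix c assume c: "f x < c"
    show "eventually (\<lambda>y. f y < c) (at x within S)"
    proof (cases "\<exists>v\<in>f`S. c \<le> v")
      case True
      then obtain v where v: "v\<in>f`S" "c \<le> v" by blast
      obtain w where w: "f x < w" "w < c" using dense[OF c] by blast
      then have "w \<in> f`S" using iv[of "f x" v w] v x by auto
      then obtain x1 where x1: "x1\<in>S" "w = f x1" by auto
      have "x1 < x"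
      proof (rule ccontr)
        assume "\<not> x1 < x" then have "f x1 \<le> f x" using mono[OF x x1(1)] by auto
        then show False using w x1 by auto
      qed
      have "eventually (\<lambda>y. x1 < y) (at x within S)"
        using order_tendstoD(1)[OF tendsto_ident_at \<open>x1 < x\<close>] .
      from eventually_conj[OF this inS[of x]] show ?thesis
        by (rule eventually_mono) (metis less_imp_le mono x1 w order_le_less_trans)
    next
      case False
      from inS[of x] show ?thesis by (rule eventually_mono) (use False in \<open>auto simp: not_le\<close>)
    qed
  qed
  then show ?thesis by (simp add: continuous_on_def)
qed

definition sb :: "(real \<Rightarrow> real) \<Rightarrow> bool" where
  "sb f \<longleftrightarrow> bij_betw f {0..1} {0..1} \<and> strict_mono_on {0..1} f"

lemma sb_range: "sb f \<Longrightarrow> x \<in> {0..1} \<Longrightarrow> f x \<in> {0..1}"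
  unfolding sb_def bij_betw_def by auto

lemma sb_less_iff: "sb f \<Longrightarrow> x \<in> {0..1} \<Longrightarrow> y \<in> {0..1} \<Longrightarrow> f x < f y \<longleftrightarrow> x < y"
  unfolding sb_def by (metis linorder_neqE_linordered_idom order_less_asym strict_mono_onD)

lemma sb_le_iff: "sb f \<Longrightarrow> x \<in> {0..1} \<Longrightarrow> y \<in> {0..1} \<Longrightarrow> f x \<le> f y \<longleftrightarrow> x \<le> y"
  by (meson not_le sb_less_iff)

lemma sb_eq_iff: "sb f \<Longrightarrow> x \<in> {0..1} \<Longrightarrow> y \<in> {0..1} \<Longrightarrow> f x = f y \<longleftrightarrow> x = y"
  by (metis order.antisym order.refl sb_le_iff)

lemma sb_0: "sb f \<Longrightarrow> f 0 = 0"
proof -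
  assume s: "sb f"
  then obtain x where x: "x \<in> {0..1}" "f x = 0" unfolding sb_def bij_betw_def
    by (metis atLeastAtMost_iff imageE order_refl zero_le_one)
  have "f 0 \<le> f x" using sb_le_iff[OF s, of 0 x] x by auto
  moreover have "f 0 \<ge> 0" using sb_range[OF s, of 0] by auto
  ultimately show ?thesis using x by auto
qed

lemma sb_1: "sb f \<Longrightarrow> f 1 = 1"
proof -
  assume s: "sb f"
  then obtain x where x: "x \<in> {0..1}" "f x = 1" unfolding sb_def bij_betw_def
    by (metis atLeastAtMost_iff imageE order_refl zero_le_one)
  have "f x \<le> f 1" using sb_le_iff[OF s, of x 1] x by auto
  moreover have "f 1 \<le> 1" using sb_range[OF s, of 1] by auto
  ultimately show ?thesis using x by auto
qed

lemma sb_cont: "sb f \<Longrightarrow> continuous_on {0..1} f"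
  apply (rule mono_interval_cont)
  apply (simp add: sb_le_iff)
  apply (auto simp: sb_def bij_betw_def)
  done

lemma sb_inv: "sb f \<Longrightarrow> sb (inv_into {0..1} f)"
  unfolding sb_def
  apply (intro conjI)
   apply (simp add: bij_betw_inv_into)
proof (rule strict_mono_onI)
  fix r s :: real assume f: "bij_betw f {0..1} {0..1} \<and> strict_mono_on {0..1} f"
    and rs: "r \<in> {0..1}" "s \<in> {0..1}" "r < s"
  let ?g = "inv_into {0..1} f"
  have g: "?g r \<in> {0..1}" "?g s \<in> {0..1}" "f (?g r) = r" "f (?g s) = s"
  proof -
    have "?g ` {0..1} = {0..1}" using f bij_betw_inv_into[of f "{0..1}" "{0..1}"] bij_betw_imp_surj_on by blast
    then have "?g r \<in> {0..1}" "?g s \<in> {0..1}" using rs by blast+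
    moreover have "f (?g r) = r" "f (?g s) = s" using f rs by (auto simp: bij_betw_def f_inv_into_f)
    ultimately show "?g r \<in> {0..1}" "?g s \<in> {0..1}" "f (?g r) = r" "f (?g s) = s" by auto
  qed
  show "?g r < ?g s"
  proof (rule ccontr)
    assume "\<not> ?g r < ?g s"
    then have "?g s \<le> ?g r" by simp
    then have "f (?g s) \<le> f (?g r)" using f g strict_mono_on_leD[of "{0..1}" f "?g s" "?g r"] by auto
    then show False using g rs by auto
  qed
qed

lemma sb_inv_f: "sb f \<Longrightarrow> x \<in> {0..1} \<Longrightarrow> inv_into {0..1} f (f x) = x"
  unfolding sb_def bij_betw_def by auto

lemma sb_f_inv: "sb f \<Longrightarrow> x \<in> {0..1} \<Longrightarrow> f (inv_into {0..1} f x) = x"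
  unfolding sb_def bij_betw_def by (simp add: f_inv_into_f)

lemma sb_pos: "sb f \<Longrightarrow> x \<in> {0..1} \<Longrightarrow> 0 < f x \<longleftrightarrow> 0 < x"
  using sb_less_iff[of f 0 x] sb_0[of f] by auto

lemma sb_lt1: "sb f \<Longrightarrow> x \<in> {0..1} \<Longrightarrow> f x < 1 \<longleftrightarrow> x < 1"
  using sb_less_iff[of f x 1] sb_1[of f] by auto



locale stn =
  fixes T :: "real \<Rightarrow> real \<Rightarrow> real"
  assumes st: "strict_tnorm T"
begin

lemma T_range: "x \<in> {0..1} \<Longrightarrow> y \<in> {0..1} \<Longrightarrow> T x y \<in> {0..1}"
  using st unfolding strict_tnorm_def tnorm_def by blast

lemma T_ge0: "0 \<le> x \<Longrightarrow> x \<le> 1 \<Longrightarrow> 0 \<le> y \<Longrightarrow> y \<le> 1 \<Longrightarrow> 0 \<le> T x y"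
  using T_range by auto

lemma T_le1: "0 \<le> x \<Longrightarrow> x \<le> 1 \<Longrightarrow> 0 \<le> y \<Longrightarrow> y \<le> 1 \<Longrightarrow> T x y \<le> 1"
  using T_range by auto

lemma T_comm: "x \<in> {0..1} \<Longrightarrow> y \<in> {0..1} \<Longrightarrow> T x y = T y x"
  using st unfolding strict_tnorm_def tnorm_def by blast

lemma T_assoc: "x \<in> {0..1} \<Longrightarrow> y \<in> {0..1} \<Longrightarrow> z \<in> {0..1} \<Longrightarrow> T x (T y z) = T (T x y) z"
  using st unfolding strict_tnorm_def tnorm_def by blast

lemma T_mono1: "x \<in> {0..1} \<Longrightarrow> x' \<in> {0..1} \<Longrightarrow> y \<in> {0..1} \<Longrightarrow> x \<le> x' \<Longrightarrow> T x y \<le> T x' y"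
  using st unfolding strict_tnorm_def tnorm_def by blast

lemma T_mono2: "x \<in> {0..1} \<Longrightarrow> x' \<in> {0..1} \<Longrightarrow> y \<in> {0..1} \<Longrightarrow> x \<le> x' \<Longrightarrow> T y x \<le> T y x'"
  using st unfolding strict_tnorm_def tnorm_def by blast

lemma T_one: "x \<in> {0..1} \<Longrightarrow> T x 1 = x"
  using st unfolding strict_tnorm_def tnorm_def by blast

lemma T_one': "x \<in> {0..1} \<Longrightarrow> T 1 x = x"
  using T_comm T_one by force

lemma T_cont: "continuous_on ({0..1} \<times> {0..1}) (\<lambda>(x, y). T x y)"
  using st unfolding strict_tnorm_def by blast

lemma T_strict1: "x \<in> {0..1} \<Longrightarrow> x' \<in> {0..1} \<Longrightarrow> y \<in> {0..1} \<Longrightarrow> 0 < y \<Longrightarrow> x < x' \<Longrightarrow> T x y < T x' y"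
  using st unfolding strict_tnorm_def by blast

lemma T_strict2: "x \<in> {0..1} \<Longrightarrow> x' \<in> {0..1} \<Longrightarrow> y \<in> {0..1} \<Longrightarrow> 0 < y \<Longrightarrow> x < x' \<Longrightarrow> T y x < T y x'"
  using T_strict1 T_comm by metis

lemma T_zero: "y \<in> {0..1} \<Longrightarrow> T 0 y = 0"
proof -
  assume y: "y \<in> {0..1}"
  have "T 0 y \<le> T 0 1" using T_mono2[of y 1 0] y by auto
  then show ?thesis using T_one[of 0] T_range[of 0 y] y by auto
qed

lemma T_zero': "y \<in> {0..1} \<Longrightarrow> T y 0 = 0"
  using T_zero T_comm by force

lemma T_pos: "x \<in> {0..1} \<Longrightarrow> y \<in> {0..1} \<Longrightarrow> 0 < x \<Longrightarrow> 0 < y \<Longrightarrow> 0 < T x y"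
  using T_strict1[of 0 x y] T_zero by auto

lemma T_lt: "x \<in> {0..1} \<Longrightarrow> y \<in> {0..1} \<Longrightarrow> 0 < x \<Longrightarrow> y < 1 \<Longrightarrow> T x y < x"
  using T_strict2[of y 1 x] T_one[of x] by auto

lemma T_le: "x \<in> {0..1} \<Longrightarrow> y \<in> {0..1} \<Longrightarrow> T x y \<le> x"
  using T_mono2[of y 1 x] T_one[of x] by auto

lemma T_tendsto:
  assumes "(f \<longlongrightarrow> u) F" "(g \<longlongrightarrow> v) F" "u \<in> {0..1}" "v \<in> {0..1}"
    "eventually (\<lambda>x. f x \<in> {0..1}) F" "eventually (\<lambda>x. g x \<in> {0..1}) F"
  shows "((\<lambda>x. T (f x) (g x)) \<longlongrightarrow> T u v) F"
proof -
  have "((\<lambda>x. (f x, g x)) \<longlongrightarrow> (u, v)) F" by (rule tendsto_Pair) (use assms in auto)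
  from continuous_on_tendsto_compose[OF T_cont this] assms(3-6)
  show ?thesis by (auto simp: o_def eventually_conj_iff intro: eventually_mono[OF eventually_conj[OF assms(5,6)]])
qed

primrec tp :: "real \<Rightarrow> nat \<Rightarrow> real" where
  "tp x 0 = 1"
| "tp x (Suc k) = T x (tp x k)"

lemma tp_range: "x \<in> {0..1} \<Longrightarrow> tp x k \<in> {0..1}"
  by (induction k) (auto intro: T_ge0 T_le1)

lemma tp_add: "x \<in> {0..1} \<Longrightarrow> tp x (m + n) = T (tp x m) (tp x n)"
proof (induction m)
  case 0 then show ?case using T_one' tp_range by simp
next
  case (Suc m)
  then show ?case using T_assoc[of x "tp x m" "tp x n"] tp_range by simp
qed

lemma tp_sq: "x \<in> {0..1} \<Longrightarrow> tp (T x x) k = tp x (2 * k)"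
proof (induction k)
  case 0 then show ?case by simp
next
  case (Suc k)
  have "tp (T x x) (Suc k) = T (T x x) (tp x (2*k))" using Suc by simp
  also have "\<dots> = T x (T x (tp x (2*k)))" using T_assoc[of x x "tp x (2*k)"] Suc.prems tp_range by simp
  also have "\<dots> = tp x (2 * Suc k)" by simp
  finally show ?case .
qed

lemma tp_pos: "x \<in> {0..1} \<Longrightarrow> 0 < x \<Longrightarrow> 0 < tp x k"
proof (induction k)
  case (Suc k) then show ?case using T_pos[of x "tp x k"] tp_range[of x k] by simp
qed simp

lemma tp_antimono: "x \<in> {0..1} \<Longrightarrow> m \<le> n \<Longrightarrow> tp x n \<le> tp x m"
proof -
  assume x: "x \<in> {0..1}" and mn: "m \<le> n"
  have "tp x n = T (tp x m) (tp x (n - m))" using tp_add[OF x, of m "n - m"] mn by simp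
  also have "\<dots> \<le> tp x m" using T_le tp_range x by blast
  finally show ?thesis .
qed

lemma tp_lt1: "x \<in> {0..1} \<Longrightarrow> x < 1 \<Longrightarrow> 0 < k \<Longrightarrow> tp x k < 1"
proof -
  assume x: "x \<in> {0..1}" "x < 1" and k: "0 < k"
  have "tp x k \<le> tp x 1" using tp_antimono[OF x(1), of 1 k] k by simp
  also have "tp x 1 = x" using T_one x by simp
  finally show ?thesis using x by simp
qed

lemma tp_to0: assumes x: "x \<in> {0..1}" "x < 1" shows "tp x \<longlonglongrightarrow> 0"
proof -
  have dec: "decseq (tp x)" using tp_antimono[OF x(1)] by (simp add: decseq_def)
  obtain L where L: "tp x \<longlonglongrightarrow> L" "\<And>i. L \<le> tp x i"
    using decseq_convergent[OF dec, of 0] tp_range[OF x(1)] by auto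
  have L01: "L \<in> {0..1}"
    using L tp_range[OF x(1)] LIMSEQ_le_const[OF L(1), of 0] by (auto intro: order.trans[OF L(2)[of 0]])
  have "(\<lambda>n. tp x (Suc n)) \<longlonglongrightarrow> L" using L(1) by (rule LIMSEQ_Suc)
  moreover have "(\<lambda>n. tp x (Suc n)) \<longlonglongrightarrow> T x L"
    unfolding tp.simps
    by (rule T_tendsto) (use L L01 x tp_range in auto)
  ultimately have "T x L = L" using LIMSEQ_unique by blast
  then have "L = 0" using T_lt[of L x] T_comm[of x L] L01 x by force
  then show ?thesis using L by simp
qed

end


context stn
begin

lemma sq_cont: "continuous_on {0..1} (\<lambda>x. T x x)"
proof -
  have "continuous_on {0..1} (\<lambda>x. (\<lambda>(x, y). T x y) (x, x))"
    by (rule continuous_on_compose2[OF T_cont]) (auto intro!: continuous_intros)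
  then show ?thesis by simp
qed

lemma sq_surj: "y \<in> {0..1} \<Longrightarrow> \<exists>x\<in>{0..1}. T x x = y"
proof -
  assume y: "y \<in> {0..1}"
  have "T 0 0 \<le> y" "y \<le> T 1 1" using T_zero[of 0] T_one[of 1] y by auto
  from IVT'[of "\<lambda>x. T x x", OF this _ sq_cont] show ?thesis by auto
qed

definition r :: "real \<Rightarrow> real" where
  "r y = (SOME x. x \<in> {0..1} \<and> T x x = y)"

lemma r_prop: assumes "y \<in> {0..1}" shows "r y \<in> {0..1} \<and> T (r y) (r y) = y"
proof -
  have "\<exists>x. x \<in> {0..1} \<and> T x x = y" using sq_surj[OF assms] by blast
  then show ?thesis unfolding r_def by (rule someI_ex)
qed

primrec b :: "nat \<Rightarrow> real" where
  "b 0 = 1/2"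
| "b (Suc n) = r (b n)"

lemma b_bounds: "0 < b n \<and> b n < 1"
proof (induction n)
  case (Suc n)
  then have y: "b n \<in> {0..1}" by auto
  from r_prop[OF y] have *: "r (b n) \<in> {0..1}" "T (r (b n)) (r (b n)) = b n" by auto
  have "r (b n) \<noteq> 0" using * T_zero[of 0] Suc by auto
  moreover have "r (b n) \<noteq> 1" using * T_one[of 1] Suc by auto
  ultimately show ?case using * by auto
qed simp

lemma b_in: "b n \<in> {0..1}"
  using b_bounds[of n] by auto

lemma b_sq: "T (b (Suc n)) (b (Suc n)) = b n"
  using r_prop[OF b_in[of n]] by simp

lemma b_inc: "b n < b (Suc n)"
  using T_lt[of "b (Suc n)" "b (Suc n)"] b_sq[of n] b_bounds[of "Suc n"] b_in[of "Suc n"] by simp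

lemma b_to1: "b \<longlonglongrightarrow> 1"
proof -
  have inc: "incseq b" using b_inc by (simp add: incseq_SucI less_imp_le)
  obtain L where L: "b \<longlonglongrightarrow> L" "\<And>i. b i \<le> L"
    using incseq_convergent[OF inc, of 1] b_bounds by (auto intro: less_imp_le)
  have L1: "L \<le> 1" using LIMSEQ_le_const2[OF L(1), of 1] b_bounds by (auto intro: less_imp_le)
  have L0: "0 < L" using L(2)[of 0] by simp
  have "(\<lambda>n. b (Suc n)) \<longlonglongrightarrow> L" using L(1) by (rule LIMSEQ_Suc)
  then have "(\<lambda>n. T (b (Suc n)) (b (Suc n))) \<longlonglongrightarrow> T L L"
    by (intro T_tendsto) (use L0 L1 b_in in \<open>simp_all del: b.simps\<close>)
  then have "b \<longlonglongrightarrow> T L L" using b_sq by simp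
  then have "T L L = L" using L(1) LIMSEQ_unique by blast
  then have "L = 1" using T_lt[of L L] L0 L1 by force
  then show ?thesis using L by simp
qed

definition g :: "nat \<Rightarrow> nat \<Rightarrow> real" where
  "g k n = tp (b n) k"

lemma g_range: "g k n \<in> {0..1}"
  unfolding g_def using tp_range b_in by blast

lemma g_pos: "0 < g k n"
  unfolding g_def using tp_pos b_in b_bounds by blast

lemma g_double: "g (2 * k) (Suc n) = g k n"
  unfolding g_def using tp_sq[OF b_in[of "Suc n"], of k] b_sq[of n] by simp

lemma g_scale: "g (k * 2 ^ m) (n + m) = g k n"
proof (induction m)
  case (Suc m)
  have "g (k * 2 ^ Suc m) (n + Suc m) = g (2 * (k * 2 ^ m)) (Suc (n + m))"
    by (simp add: ac_simps)
  also have "\<dots> = g k n" using g_double Suc by simp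
  finally show ?case .
qed simp

lemma g_antimono: "k \<le> k' \<Longrightarrow> g k' n \<le> g k n"
  unfolding g_def using tp_antimono b_in by blast

lemma g_add: "g (k + k') n = T (g k n) (g k' n)"
  unfolding g_def using tp_add b_in by blast

lemma g_Suc: "g (Suc k) n = T (g k n) (b n)"
  using g_add[of k 1 n] T_one[OF b_in] by (simp add: g_def)

definition kap :: "nat \<Rightarrow> real \<Rightarrow> nat" where
  "kap n t = nat \<lfloor>t * 2 ^ n\<rfloor>"

definition sq :: "real \<Rightarrow> nat \<Rightarrow> real" where
  "sq t n = g (kap n t) n"

lemma kap_Suc: "0 \<le> t \<Longrightarrow> 2 * kap n t \<le> kap (Suc n) t"
proof -
  assume t: "0 \<le> t"
  have "2 * \<lfloor>t * 2 ^ n\<rfloor> \<le> \<lfloor>t * 2 ^ Suc n\<rfloor>"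
  proof -
    have eq: "t * 2 ^ Suc n = t * 2 ^ n + t * 2 ^ n" by simp
    show ?thesis unfolding eq mult_2 by (rule le_floor_add)
  qed
  moreover have "0 \<le> \<lfloor>t * 2 ^ n\<rfloor>" using t by simp
  ultimately have "nat (2 * \<lfloor>t * 2 ^ n\<rfloor>) \<le> nat \<lfloor>t * 2 ^ Suc n\<rfloor>" by (intro nat_mono)
  moreover have "nat (2 * \<lfloor>t * 2 ^ n\<rfloor>) = 2 * nat \<lfloor>t * 2 ^ n\<rfloor>" by (simp add: nat_mult_distrib)
  ultimately show ?thesis unfolding kap_def by simp
qed

lemma sq_dec: "0 \<le> t \<Longrightarrow> decseq (sq t)"
proof (rule decseq_SucI)
  fix n assume t: "0 \<le> t"
  have "sq t (Suc n) \<le> g (2 * kap n t) (Suc n)"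
    unfolding sq_def by (rule g_antimono[OF kap_Suc[OF t]])
  then show "sq t (Suc n) \<le> sq t n" by (simp add: g_double sq_def)
qed

definition G :: "real \<Rightarrow> real" where
  "G t = lim (sq t)"

lemma G_lim: "0 \<le> t \<Longrightarrow> sq t \<longlonglongrightarrow> G t"
proof -
  assume t: "0 \<le> t"
  have bnd: "\<forall>i. 0 \<le> sq t i" using g_range by (simp add: sq_def)
  obtain L where "sq t \<longlonglongrightarrow> L"
    using decseq_convergent[OF sq_dec[OF t] bnd] by blast
  then show ?thesis unfolding G_def by (simp add: limI)
qed

lemma G_range: "0 \<le> t \<Longrightarrow> G t \<in> {0..1}"
proof -
  assume t: "0 \<le> t"
  have "G t \<ge> 0" by (rule LIMSEQ_le_const[OF G_lim[OF t]]) (use g_range in \<open>auto simp: sq_def\<close>)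
  moreover have "G t \<le> 1" by (rule LIMSEQ_le_const2[OF G_lim[OF t]]) (use g_range in \<open>auto simp: sq_def\<close>)
  ultimately show ?thesis by auto
qed

lemma G_dyadic: "G (real k / 2 ^ n) = g k n"
proof -
  have "sq (real k / 2 ^ n) (m + n) = g k n" for m
  proof -
    have "real k / 2 ^ n * 2 ^ (m + n) = real (k * 2 ^ m)"
      by (simp add: power_add)
    then have "kap (m + n) (real k / 2 ^ n) = k * 2 ^ m"
      unfolding kap_def by (metis floor_of_nat nat_int)
    then show ?thesis unfolding sq_def using g_scale[of k m n] by (simp add: add.commute)
  qed
  then have "(\<lambda>m. sq (real k / 2 ^ n) (m + n)) \<longlonglongrightarrow> g k n" by simp
  moreover have "(\<lambda>m. sq (real k / 2 ^ n) (m + n)) \<longlonglongrightarrow> G (real k / 2 ^ n)"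
    by (rule LIMSEQ_ignore_initial_segment[OF G_lim]) simp
  ultimately show ?thesis using LIMSEQ_unique by blast
qed

lemma G_nat: "G (real k) = tp (b 0) k"
  using G_dyadic[of k 0] by (simp add: g_def)

lemma G_pow: "G (1 / 2 ^ n) = b n"
  using G_dyadic[of 1 n] T_one[OF b_in] by (simp add: g_def)

lemma G_0: "G 0 = 1"
  using G_nat[of 0] by simp

lemma G_antimono: "0 \<le> s \<Longrightarrow> s \<le> t \<Longrightarrow> G t \<le> G s"
proof -
  assume st: "0 \<le> s" "s \<le> t"
  have "kap n s \<le> kap n t" for n
    unfolding kap_def using st by (intro nat_mono floor_mono) simp
  then have "sq t n \<le> sq s n" for n unfolding sq_def by (rule g_antimono)
  then show ?thesis using LIMSEQ_le[OF G_lim G_lim] st by auto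
qed

lemma kap_add: "0 \<le> s \<Longrightarrow> 0 \<le> t \<Longrightarrow>
  kap n s + kap n t \<le> kap n (s + t) \<and> kap n (s + t) \<le> kap n s + kap n t + 1"
proof -
  assume st: "0 \<le> s" "0 \<le> t"
  let ?x = "s * 2 ^ n" and ?y = "t * 2 ^ n"
  have x: "0 \<le> \<lfloor>?x\<rfloor>" "0 \<le> \<lfloor>?y\<rfloor>" using st by auto
  have "\<lfloor>?x\<rfloor> + \<lfloor>?y\<rfloor> \<le> \<lfloor>?x + ?y\<rfloor>" by (rule le_floor_add)
  moreover have "\<lfloor>?x + ?y\<rfloor> \<le> \<lfloor>?x\<rfloor> + \<lfloor>?y\<rfloor> + 1"
    using floor_add[of ?x ?y] by (auto split: if_splits)
  moreover have "(s + t) * 2 ^ n = ?x + ?y" by (simp add: algebra_simps)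
  moreover have "int (kap n s) = \<lfloor>?x\<rfloor>" "int (kap n t) = \<lfloor>?y\<rfloor>"
    unfolding kap_def using x by simp_all
  moreover have "int (kap n (s + t)) = \<lfloor>?x + ?y\<rfloor>"
    unfolding kap_def using x le_floor_add[of ?x ?y] by (simp add: algebra_simps)
  ultimately have "int (kap n s) + int (kap n t) \<le> int (kap n (s + t))"
    "int (kap n (s + t)) \<le> int (kap n s) + int (kap n t) + 1" by linarith+
  then show ?thesis by linarith
qed

lemma G_add: "0 \<le> s \<Longrightarrow> 0 \<le> t \<Longrightarrow> G (s + t) = T (G s) (G t)"
proof -
  assume st: "0 \<le> s" "0 \<le> t"
  let ?p = "\<lambda>n. kap n s" and ?q = "\<lambda>n. kap n t"
  have up: "(\<lambda>n. T (g (?p n) n) (g (?q n) n)) \<longlonglongrightarrow> T (G s) (G t)"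
    by (rule T_tendsto) (use G_lim[OF st(1), unfolded sq_def] G_lim[OF st(2), unfolded sq_def] G_range st g_range in \<open>auto\<close>)
  have lo: "(\<lambda>n. T (T (g (?p n) n) (g (?q n) n)) (b n)) \<longlonglongrightarrow> T (T (G s) (G t)) 1"
    by (rule T_tendsto[OF up b_to1]) (use G_range st g_range b_in T_range in auto)
  have "T (T (G s) (G t)) 1 = T (G s) (G t)" using T_one T_range G_range st by blast
  note lo = lo[unfolded this]
  have "sq (s + t) \<longlonglongrightarrow> T (G s) (G t)"
  proof (rule tendsto_sandwich[OF _ _ lo up])
    show "eventually (\<lambda>n. T (T (g (?p n) n) (g (?q n) n)) (b n) \<le> sq (s + t) n) sequentially"
    proof (rule always_eventually, rule allI)
      fix n
      have "T (T (g (?p n) n) (g (?q n) n)) (b n) = g (Suc (?p n + ?q n)) n"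
        by (simp add: g_add g_Suc)
      also have "\<dots> \<le> sq (s + t) n" unfolding sq_def by (rule g_antimono) (use kap_add[OF st, of n] in auto)
      finally show "T (T (g (?p n) n) (g (?q n) n)) (b n) \<le> sq (s + t) n" .
    qed
    show "eventually (\<lambda>n. sq (s + t) n \<le> T (g (?p n) n) (g (?q n) n)) sequentially"
    proof (rule always_eventually, rule allI)
      fix n
      have "sq (s + t) n \<le> g (?p n + ?q n) n" unfolding sq_def by (rule g_antimono) (use kap_add[OF st, of n] in auto)
      then show "sq (s + t) n \<le> T (g (?p n) n) (g (?q n) n)" by (simp add: g_add)
    qed
  qed
  then show ?thesis using G_lim[of "s + t"] st LIMSEQ_unique by auto
qed

lemma G_pos: "0 \<le> t \<Longrightarrow> 0 < G t"
proof -
  assume t: "0 \<le> t"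
  have "t \<le> real (nat \<lceil>t\<rceil>)" by linarith
  then have "G (real (nat \<lceil>t\<rceil>)) \<le> G t" using G_antimono t by blast
  moreover have "0 < G (real (nat \<lceil>t\<rceil>))" unfolding G_nat using tp_pos b_in b_bounds by blast
  ultimately show ?thesis by simp
qed

lemma G_small: "0 \<le> h \<Longrightarrow> h \<le> 1 / 2 ^ n \<Longrightarrow> b n \<le> G h"
  using G_antimono[of h "1 / 2 ^ n"] G_pow by simp

lemma G_lt1: "0 < h \<Longrightarrow> G h < 1"
proof -
  assume h: "0 < h"
  obtain n where n: "(1/2::real) ^ n < h" using real_arch_pow_inv[OF h, of "1/2"] by auto
  have "G h \<le> G (1 / 2 ^ n)" using G_antimono[of "1 / 2 ^ n" h] n by (simp add: power_divide)
  then show ?thesis using G_pow b_bounds[of n] by simp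
qed

lemma G_strict: "0 \<le> s \<Longrightarrow> s < t \<Longrightarrow> G t < G s"
proof -
  assume st: "0 \<le> s" "s < t"
  have "G t = T (G s) (G (t - s))" using G_add[of s "t - s"] st by simp
  also have "\<dots> < G s" using T_lt[of "G s" "G (t - s)"] G_range G_pos G_lt1 st by simp
  finally show ?thesis .
qed

end


context stn
begin

lemma T_unif: assumes e: "0 < e" shows "\<exists>n. \<forall>x\<in>{0..1}. x - T x (b n) < e"
proof -
  have "uniformly_continuous_on ({0..1}\<times>{0..1}) (\<lambda>(x,y). T x y)"
    by (rule compact_uniformly_continuous[OF T_cont]) (intro compact_Times compact_Icc)
  then obtain d where d: "d > 0" and
    dd: "\<And>p p'. p \<in> {0..1}\<times>{0..1} \<Longrightarrow> p' \<in> {0..1}\<times>{0..1} \<Longrightarrow> dist p' p < d \<Longrightarrow>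
       dist ((\<lambda>(x,y). T x y) p') ((\<lambda>(x,y). T x y) p) < e"
    unfolding uniformly_continuous_on_def using e by metis
  obtain n where n: "norm (b n - 1) < d"
    using b_to1 d unfolding LIMSEQ_iff by blast
  have "x - T x (b n) < e" if x: "x \<in> {0..1}" for x
  proof -
    have "dist (x, b n) (x, 1) < d" using n by (simp add: dist_Pair_Pair dist_real_def)
    from dd[of "(x, 1)" "(x, b n)", OF _ _ this] x b_in[of n]
    have "dist (T x (b n)) (T x 1) < e" by auto
    then show ?thesis using T_one[OF x] by (simp add: dist_real_def)
  qed
  then show ?thesis by blast
qed

lemma G_close: assumes n: "\<forall>x\<in>{0..1}. x - T x (b n) < e"
  and uv: "0 \<le> u" "u \<le> v" "v - u \<le> 1 / 2 ^ n"
  shows "G v \<le> G u \<and> G u - G v < e"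
proof -
  have gv: "G v = T (G u) (G (v - u))" using G_add[of u "v - u"] uv by simp
  have "b n \<le> G (v - u)" using G_small[of "v - u" n] uv by simp
  then have "T (G u) (b n) \<le> G v" unfolding gv
    using T_mono2[of "b n" "G (v - u)" "G u"] b_in G_range uv by simp
  moreover have "G u - T (G u) (b n) < e" using n G_range uv by simp
  moreover have "G v \<le> G u" using G_antimono uv by simp
  ultimately show ?thesis by simp
qed

lemma G_cont: "continuous_on {0..} G"
  unfolding continuous_on_iff
proof (intro ballI allI impI)
  fix t e :: real assume t: "t \<in> {0..}" and e: "0 < e"
  obtain n where n: "\<forall>x\<in>{0..1}. x - T x (b n) < e" using T_unif[OF e] by blast
  show "\<exists>d>0. \<forall>t'\<in>{0..}. dist t' t < d \<longrightarrow> dist (G t') (G t) < e"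
  proof (intro exI[of _ "1 / 2 ^ n"] conjI ballI impI)
    fix t' assume t': "t' \<in> {0..}" and dt: "dist t' t < 1 / 2 ^ n"
    show "dist (G t') (G t) < e"
    proof (cases "t \<le> t'")
      case True
      then show ?thesis using G_close[OF n, of t t'] t t' dt by (simp add: dist_real_def)
    next
      case False
      then show ?thesis using G_close[OF n, of t' t] t t' dt by (simp add: dist_real_def)
    qed
  qed simp
qed

lemma G_surj: assumes y: "0 < y" "y \<le> 1" shows "\<exists>t\<ge>0. G t = y"
proof -
  have "eventually (\<lambda>k. tp (b 0) k < y) sequentially"
    using order_tendstoD(2)[OF tp_to0 y(1)] b_in[of 0] b_bounds[of 0] by simp
  then obtain N where N: "tp (b 0) N < y" by (auto simp: eventually_sequentially)
  have "G (real N) \<le> y" "y \<le> G 0" using N G_nat[of N] G_0 y by auto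
  from IVT2'[of G "real N" y 0, OF this _ continuous_on_subset[OF G_cont]]
  show ?thesis by auto
qed

lemma G_inj: "inj_on G {0..}"
proof (rule inj_onI)
  fix s t assume "s \<in> {0..}" "t \<in> {0..}" "G s = G t"
  then show "s = t" using G_strict[of s t] G_strict[of t s] by (cases s t rule: linorder_cases) auto
qed

theorem rep: "\<exists>\<phi>. sb \<phi> \<and> (\<forall>x\<in>{0..1}. \<forall>y\<in>{0..1}. \<phi> (T x y) = \<phi> x * \<phi> y)"
proof -
  define l where "l = inv_into {0..} G"
  define \<phi> where "\<phi> x = (if x = 0 then 0 else exp (- l x))" for x
  have lG: "0 \<le> t \<Longrightarrow> l (G t) = t" for t unfolding l_def using G_inj by (simp add: inv_into_f_f)
  have Gl: "0 < x \<Longrightarrow> x \<le> 1 \<Longrightarrow> G (l x) = x \<and> 0 \<le> l x" for x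
  proof -
    assume x: "0 < x" "x \<le> 1"
    then have "x \<in> G ` {0..}" using G_surj[of x] by auto
    then show ?thesis unfolding l_def using inv_into_into[of x G "{0..}"] by (auto simp: f_inv_into_f)
  qed
  have hom: "\<phi> (T x y) = \<phi> x * \<phi> y" if x: "x \<in> {0..1}" and y: "y \<in> {0..1}" for x y
  proof (cases "x = 0 \<or> y = 0")
    case True
    then show ?thesis using T_zero T_zero' x y by (auto simp: \<phi>_def)
  next
    case False
    then have xy: "0 < x" "0 < y" using x y by auto
    have Txy: "0 < T x y" "T x y \<le> 1" using T_pos[OF x y xy] T_range[OF x y] by auto
    have "T x y = T (G (l x)) (G (l y))" using Gl xy x y by simp
    also have "\<dots> = G (l x + l y)" using G_add Gl xy x y by simp
    finally have "l (T x y) = l x + l y" using lG Gl xy x y by simp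
    then show ?thesis unfolding \<phi>_def using xy Txy by (simp add: exp_add[symmetric])
  qed
  have smono: "strict_mono_on {0..1} \<phi>"
  proof (rule strict_mono_onI)
    fix x y :: real assume x: "x \<in> {0..1}" and y: "y \<in> {0..1}" and xy: "x < y"
    show "\<phi> x < \<phi> y"
    proof (cases "x = 0")
      case True then show ?thesis using xy by (simp add: \<phi>_def)
    next
      case False
      then have x0: "0 < x" using x by auto
      have "l y < l x"
      proof (rule ccontr)
        assume "\<not> l y < l x"
        moreover have "0 \<le> l x" "G (l x) = x" "G (l y) = y" using Gl[of x] Gl[of y] x0 x y xy by auto
        ultimately have "G (l y) \<le> G (l x)" using G_antimono[of "l x" "l y"] by simp
        then show False using Gl x0 x y xy by simp
      qed
      then show ?thesis using x0 xy by (simp add: \<phi>_def)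
    qed
  qed
  have img: "\<phi> ` {0..1} = {0..1}"
  proof
    show "\<phi> ` {0..1} \<subseteq> {0..1}"
    proof
      fix z assume "z \<in> \<phi> ` {0..1}"
      then obtain x where x: "x \<in> {0..1}" "z = \<phi> x" by auto
      show "z \<in> {0..1}"
      proof (cases "x = 0")
        case False
        then have "0 \<le> l x" using Gl x by simp
        then show ?thesis using x False by (simp add: \<phi>_def)
      qed (use x in \<open>simp add: \<phi>_def\<close>)
    qed
    show "{0..1} \<subseteq> \<phi> ` {0..1}"
    proof
      fix z :: real assume z: "z \<in> {0..1}"
      show "z \<in> \<phi> ` {0..1}"
      proof (cases "z = 0")
        case True
        then show ?thesis by (auto simp: \<phi>_def image_iff intro!: bexI[of _ 0])
      next
        case False
        then have z0: "0 < z" "z \<le> 1" using z by auto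
        define x where "x = G (- ln z)"
        have t0: "0 \<le> - ln z" using z0 by simp
        have x: "0 < x" "x \<le> 1" using G_pos[OF t0] G_range[OF t0] unfolding x_def by auto
        have "l x = - ln z" unfolding x_def using lG[OF t0] .
        then have "\<phi> x = z" using x z0 by (simp add: \<phi>_def)
        then show ?thesis using x by force
      qed
    qed
  qed
  have "sb \<phi>" unfolding sb_def bij_betw_def using smono img strict_mono_on_imp_inj_on by blast
  then show ?thesis using hom by blast
qed

end

lemma strict_tnorm_rep:
  assumes "strict_tnorm T"
  shows "\<exists>\<phi>. sb \<phi> \<and> (\<forall>x\<in>{0..1}. \<forall>y\<in>{0..1}. \<phi> (T x y) = \<phi> x * \<phi> y)"
  using stn.rep[of T] assms stn.intro by blast



lemma pa_props:
  fixes H :: "real \<Rightarrow> real"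
  assumes "pseudo_automorphism H"
  shows "\<And>x. x \<in> {0..1} \<Longrightarrow> H x \<in> {0..1}" "continuous_on {0..1} H"
    "\<And>x y. x \<in> {0..1} \<Longrightarrow> y \<in> {0..1} \<Longrightarrow> x \<le> y \<Longrightarrow> H x \<le> H y"
    "\<And>x. x \<in> {0..1} \<Longrightarrow> H x = 1 \<longleftrightarrow> x = 1"
    "\<And>x. x \<in> {0..1} \<Longrightarrow> H x = 0 \<longleftrightarrow> x = 0"
  using assms unfolding pseudo_automorphism_def mono_on_def by auto

lemma pa_comp:
  assumes H: "pseudo_automorphism H" and s: "sb \<phi>"
  shows "pseudo_automorphism (\<lambda>x. H (\<phi> x))"
  unfolding pseudo_automorphism_def
proof (intro conjI ballI)
  fix x :: real assume x: "x \<in> {0..1}"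
  show "H (\<phi> x) \<in> {0..1}" using pa_props(1)[OF H] sb_range[OF s x] by blast
  show "H (\<phi> x) = 1 \<longleftrightarrow> x = 1" using pa_props(4)[OF H] sb_range[OF s x] sb_eq_iff[OF s x, of 1] sb_1[OF s] by auto
  show "H (\<phi> x) = 0 \<longleftrightarrow> x = 0" using pa_props(5)[OF H] sb_range[OF s x] sb_eq_iff[OF s x, of 0] sb_0[OF s] by auto
next
  show "continuous_on {0..1} (\<lambda>x. H (\<phi> x))"
    by (rule continuous_on_compose2[OF pa_props(2)[OF H] sb_cont[OF s]]) (use sb_range[OF s] in auto)
  show "mono_on {0..1} (\<lambda>x. H (\<phi> x))"
    by (rule mono_onI) (use pa_props(3)[OF H] sb_range[OF s] sb_le_iff[OF s] in auto)
qed

lemma prod_cont: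
  assumes s: "sb \<phi>"
  shows "continuous_on ({0..1} \<times> {0..1}) (\<lambda>(x, y). \<phi> x * \<phi> y)"
proof -
  have "continuous_on ({0..1} \<times> {0..1}) (\<lambda>p. \<phi> (fst p))"
    by (rule continuous_on_compose2[OF sb_cont[OF s]]) (auto intro: continuous_intros)
  moreover have "continuous_on ({0..1} \<times> {0..1}) (\<lambda>p. \<phi> (snd p))"
    by (rule continuous_on_compose2[OF sb_cont[OF s]]) (auto intro: continuous_intros)
  ultimately have "continuous_on ({0..1} \<times> {0..1}) (\<lambda>p. \<phi> (fst p) * \<phi> (snd p))"
    by (rule continuous_on_mult)
  then show ?thesis by (simp add: case_prod_beta)
qed

lemma prod_range: "sb \<phi> \<Longrightarrow> (x::real) \<in> {0..1} \<Longrightarrow> y \<in> {0..1} \<Longrightarrow> \<phi> x * \<phi> y \<in> {0..1}"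
  using sb_range[of \<phi> x] sb_range[of \<phi> y] by (auto intro: mult_le_one)

lemma C3_overlap:
  assumes s: "sb \<phi>" and H: "pseudo_automorphism H"
    and O: "\<forall>x\<in>{0..1}. \<forall>y\<in>{0..1}. Ov x y = H (\<phi> x * \<phi> y)"
  shows "overlap Ov"
  unfolding overlap_def
proof (intro conjI ballI impI)
  fix x y :: real assume x: "x \<in> {0..1}" and y: "y \<in> {0..1}"
  have p: "\<phi> x * \<phi> y \<in> {0..1}" using prod_range[OF s x y] .
  have fx: "\<phi> x \<in> {0..1}" "\<phi> y \<in> {0..1}" using sb_range[OF s] x y by auto
  show "Ov x y \<in> {0..1}" using O x y pa_props(1)[OF H p] by simp
  show "Ov x y = Ov y x" using O x y by (simp add: mult.commute)
  have "Ov x y = 0 \<longleftrightarrow> \<phi> x * \<phi> y = 0" using O x y pa_props(5)[OF H p] by simp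
  also have "\<dots> \<longleftrightarrow> x * y = 0" using sb_eq_iff[OF s x, of 0] sb_eq_iff[OF s y, of 0] sb_0[OF s] by auto
  finally show "Ov x y = 0 \<longleftrightarrow> x * y = 0" .
  have "Ov x y = 1 \<longleftrightarrow> \<phi> x * \<phi> y = 1" using O x y pa_props(4)[OF H p] by simp
  also have "\<dots> \<longleftrightarrow> \<phi> x = 1 \<and> \<phi> y = 1"
  proof
    assume h: "\<phi> x * \<phi> y = 1"
    have "\<phi> x * \<phi> y \<le> \<phi> x" "\<phi> x * \<phi> y \<le> \<phi> y" using fx by (auto intro: mult_left_le mult_left_le_one_le)
    then show "\<phi> x = 1 \<and> \<phi> y = 1" using h fx by auto
  qed simp
  also have "\<dots> \<longleftrightarrow> x = 1 \<and> y = 1" using sb_eq_iff[OF s x, of 1] sb_eq_iff[OF s y, of 1] sb_1[OF s] by auto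
  also have "\<dots> \<longleftrightarrow> x * y = 1"
  proof
    assume h: "x * y = 1"
    have "x * y \<le> x" "x * y \<le> y" using x y by (auto intro: mult_left_le mult_left_le_one_le)
    then show "x = 1 \<and> y = 1" using h x y by auto
  qed simp
  finally show "Ov x y = 1 \<longleftrightarrow> x * y = 1" .
next
  fix x x' y :: real assume x: "x \<in> {0..1}" and x': "x' \<in> {0..1}" and y: "y \<in> {0..1}" and le: "x \<le> x'"
  have fx: "\<phi> x \<in> {0..1}" "\<phi> y \<in> {0..1}" "\<phi> x' \<in> {0..1}" using sb_range[OF s] x y x' by auto
  have "\<phi> x \<le> \<phi> x'" using sb_le_iff[OF s x x'] le by simp
  then have "\<phi> x * \<phi> y \<le> \<phi> x' * \<phi> y" "\<phi> y * \<phi> x \<le> \<phi> y * \<phi> x'" using fx by (auto intro: mult_right_mono mult_left_mono)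
  then show "Ov x y \<le> Ov x' y" "Ov y x \<le> Ov y x'"
    using O x y x' pa_props(3)[OF H] prod_range[OF s] by simp_all
next
  have "continuous_on ({0..1} \<times> {0..1}) (\<lambda>p. H ((\<lambda>(x, y). \<phi> x * \<phi> y) p))"
    by (rule continuous_on_compose2[OF pa_props(2)[OF H] prod_cont[OF s]]) (use prod_range[OF s] in auto)
  then show "continuous_on ({0..1} \<times> {0..1}) (\<lambda>(x, y). Ov x y)"
    by (rule continuous_on_cong[THEN iffD1, rotated 2]) (use O in auto)
qed

lemma sb_tnorm:
  assumes s: "sb \<phi>"
  defines "T \<equiv> \<lambda>(x::real) (y::real). inv_into {0..1} \<phi> (\<phi> x * \<phi> y)"
  shows "strict_tnorm T"
proof -
  let ?\<psi> = "inv_into {0..1} \<phi>"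
  have si: "sb ?\<psi>" using sb_inv[OF s] .
  have Tr: "T x y \<in> {0..1}" if "x \<in> {0..1}" "y \<in> {0..1}" for x y
    unfolding T_def using sb_range[OF si prod_range[OF s that]] .
  have fT: "\<phi> (T x y) = \<phi> x * \<phi> y" if "x \<in> {0..1}" "y \<in> {0..1}" for x y
    unfolding T_def using sb_f_inv[OF s prod_range[OF s that]] .
  have "tnorm T" unfolding tnorm_def
  proof (intro conjI ballI impI)
    fix x y z :: real assume x: "x \<in> {0..1}" and y: "y \<in> {0..1}" and z: "z \<in> {0..1}"
    show "T x y \<in> {0..1}" using Tr x y .
    show "T x y = T y x" unfolding T_def by (simp add: mult.commute)
    show "T x (T y z) = T (T x y) z"
      unfolding T_def using fT[OF y z] fT[OF x y] by (simp add: T_def mult.assoc)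
  next
    fix x x' y :: real assume x: "x \<in> {0..1}" and x': "x' \<in> {0..1}" and y: "y \<in> {0..1}" and le: "x \<le> x'"
    have fx: "\<phi> x \<in> {0..1}" "\<phi> y \<in> {0..1}" "\<phi> x' \<in> {0..1}" using sb_range[OF s] x y x' by auto
    have "\<phi> x \<le> \<phi> x'" using sb_le_iff[OF s x x'] le by simp
    then have "\<phi> x * \<phi> y \<le> \<phi> x' * \<phi> y" "\<phi> y * \<phi> x \<le> \<phi> y * \<phi> x'" using fx by (auto intro: mult_right_mono mult_left_mono)
    then show "T x y \<le> T x' y" "T y x \<le> T y x'"
      unfolding T_def using sb_le_iff[OF si] prod_range[OF s] x y x' by simp_all
  next
    fix x :: real assume x: "x \<in> {0..1}"
    show "T x 1 = x" unfolding T_def using sb_1[OF s] sb_inv_f[OF s x] by simp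
  qed
  moreover have "continuous_on ({0..1} \<times> {0..1}) (\<lambda>(x, y). T x y)"
  proof -
    have "continuous_on ({0..1} \<times> {0..1}) (\<lambda>p. ?\<psi> ((\<lambda>(x, y). \<phi> x * \<phi> y) p))"
      by (rule continuous_on_compose2[OF sb_cont[OF si] prod_cont[OF s]]) (use prod_range[OF s] in auto)
    then show ?thesis unfolding T_def by (simp add: case_prod_beta)
  qed
  moreover have "T x y < T x' y" if x: "x \<in> {0..1}" and x': "x' \<in> {0..1}" and y: "y \<in> {0..1}"
    and y0: "0 < y" and lt: "x < x'" for x x' y
  proof -
    have "0 < \<phi> y" using sb_pos[OF s y] y0 by simp
    moreover have "\<phi> x < \<phi> x'" using sb_less_iff[OF s x x'] lt by simp
    ultimately have "\<phi> x * \<phi> y < \<phi> x' * \<phi> y" by simp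
    then show ?thesis unfolding T_def using sb_less_iff[OF si] prod_range[OF s] x y x' by simp
  qed
  ultimately show ?thesis unfolding strict_tnorm_def by blast
qed

lemma C3_C2:
  assumes s: "sb \<phi>" and H: "pseudo_automorphism H"
    and O: "\<forall>x\<in>{0..1}. \<forall>y\<in>{0..1}. Ov x y = H (\<phi> x * \<phi> y)"
  shows "overlap Ov \<and> (\<exists>F T. pseudo_automorphism F \<and> strict_tnorm T \<and>
              (\<forall>x\<in>{0..1}. \<forall>y\<in>{0..1}. Ov x y = F (T x y)))"
proof -
  define T where "T = (\<lambda>x y. inv_into {0..1} \<phi> (\<phi> x * \<phi> y))"
  have "strict_tnorm T" unfolding T_def using sb_tnorm[OF s] .
  moreover have "pseudo_automorphism (\<lambda>x. H (\<phi> x))" using pa_comp[OF H s] .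
  moreover have "\<forall>x\<in>{0..1}. \<forall>y\<in>{0..1}. Ov x y = H (\<phi> (T x y))"
    unfolding T_def using O sb_f_inv[OF s prod_range[OF s]] by simp
  ultimately show ?thesis using C3_overlap[OF s H O] by blast
qed

lemma C2_C3:
  assumes F: "pseudo_automorphism F" and T: "strict_tnorm T"
    and O: "\<forall>x\<in>{0..1}. \<forall>y\<in>{0..1}. Ov x y = F (T x y)"
  shows "\<exists>\<phi> H. bij_betw \<phi> {0..1} {0..1} \<and> strict_mono_on {0..1} \<phi> \<and>
              pseudo_automorphism H \<and>
              (\<forall>x\<in>{0..1}. \<forall>y\<in>{0..1}. Ov x y = H (\<phi> x * \<phi> y))"
proof -
  obtain \<phi> where s: "sb \<phi>" and hom: "\<forall>x\<in>{0..1}. \<forall>y\<in>{0..1}. \<phi> (T x y) = \<phi> x * \<phi> y"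
    using strict_tnorm_rep[OF T] by blast
  let ?\<psi> = "inv_into {0..1} \<phi>"
  have "pseudo_automorphism (\<lambda>x. F (?\<psi> x))" using pa_comp[OF F sb_inv[OF s]] .
  moreover have "Ov x y = F (?\<psi> (\<phi> x * \<phi> y))" if x: "x \<in> {0..1}" and y: "y \<in> {0..1}" for x y
  proof -
    have "T x y \<in> {0..1}" using T x y unfolding strict_tnorm_def tnorm_def by blast
    then show ?thesis using O x y hom sb_inv_f[OF s] by metis
  qed
  ultimately show ?thesis using s unfolding sb_def by blast
qed



lemma C3_C1:
  fixes a :: real and Ov :: "real \<Rightarrow> real \<Rightarrow> real"
  assumes a: "a \<ge> 0" and s: "sb \<phi>" and H: "pseudo_automorphism H"
    and O: "\<forall>x\<in>{0..1}. \<forall>y\<in>{0..1}. Ov x y = H (\<phi> x * \<phi> y)"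
  shows "\<exists>(\<theta>::real \<Rightarrow> ennreal) (\<psi>::ennreal \<Rightarrow> real).
              continuous_on {0..1} \<theta> \<and>
              (\<forall>x\<in>{0..1}. \<forall>y\<in>{0..1}. x < y \<longrightarrow> \<theta> y < \<theta> x) \<and>
              continuous_on UNIV \<psi> \<and> antimono \<psi> \<and> (\<forall>z. \<psi> z \<in> {0..1}) \<and>
              (\<forall>x\<in>{0..1}. \<forall>y\<in>{0..1}. Ov x y = \<psi> (\<theta> x + \<theta> y)) \<and>
              overlap Ov \<and>
              ((\<forall>x\<in>{0..1}. \<theta> x = ennreal (a / 2) \<longleftrightarrow> x = 1) \<or>
               (\<forall>z. \<psi> z = 1 \<longleftrightarrow> z \<le> ennreal a))"
proof -
  define \<theta> where "\<theta> x = (if \<phi> x = 0 then top else ennreal (a/2 - ln (\<phi> x)))" for x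
  define m where "m z = (if z = top then 0 else min 1 (exp (a - enn2real z)))" for z
  define \<psi> where "\<psi> z = H (m z)" for z
  let ?\<chi> = "inv_into {0..1} \<phi>"
  have si: "sb ?\<chi>" using sb_inv[OF s] .
  have fr: "\<phi> x \<in> {0..1}" if "x \<in> {0..1}" for x using sb_range[OF s that] .
  have th_fin: "\<theta> x = ennreal (a/2 - ln (\<phi> x))" "0 < \<phi> x" "\<phi> x \<le> 1" "a/2 \<le> a/2 - ln (\<phi> x)"
    if "x \<in> {0..1}" "0 < x" for x
  proof -
    show p: "0 < \<phi> x" using sb_pos[OF s that(1)] that by simp
    show "\<theta> x = ennreal (a/2 - ln (\<phi> x))" using p by (simp add: \<theta>_def)
    show "\<phi> x \<le> 1" using fr[OF that(1)] by simp
    then show "a/2 \<le> a/2 - ln (\<phi> x)" using p by simp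
  qed
  have th0: "\<theta> 0 = top" using sb_0[OF s] by (simp add: \<theta>_def)
  have mr: "m z \<in> {0..1}" for z by (simp add: m_def)
  have strict: "\<theta> y < \<theta> x" if x: "x \<in> {0..1}" and y: "y \<in> {0..1}" and xy: "x < y" for x y
  proof (cases "x = 0")
    case True
    then show ?thesis using th0 th_fin[OF y] xy by simp
  next
    case False
    then have x0: "0 < x" using x by simp
    have "\<phi> x < \<phi> y" using sb_less_iff[OF s x y] xy by simp
    then have "ln (\<phi> x) < ln (\<phi> y)" using th_fin[OF x x0] by simp
    have y0: "0 < y" using x0 xy by simp
    have "a/2 - ln (\<phi> y) < a/2 - ln (\<phi> x)" using \<open>ln (\<phi> x) < ln (\<phi> y)\<close> by simp
    moreover have "0 \<le> a/2 - ln (\<phi> y)" using th_fin(4)[OF y y0] a by linarith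
    ultimately show ?thesis using th_fin[OF x x0] th_fin[OF y y0] by (simp add: ennreal_less_iff)
  qed
  have thmono: "\<theta> y \<le> \<theta> x" if "x \<in> {0..1}" "y \<in> {0..1}" "x \<le> y" for x y
    using strict[OF that(1,2)] that by (cases "x = y") auto
  have thimg: "\<theta> ` {0..1} = {ennreal (a/2)..}"
  proof
    show "\<theta> ` {0..1} \<subseteq> {ennreal (a/2)..}"
    proof
      fix w assume "w \<in> \<theta> ` {0..1}"
      then obtain x where x: "x \<in> {0..1}" "w = \<theta> x" by auto
      show "w \<in> {ennreal (a/2)..}"
      proof (cases "x = 0")
        case True then show ?thesis using x th0 by simp
      next
        case False
        then show ?thesis using x th_fin[OF x(1)] a by (auto intro: ennreal_leI)
      qed
    qed
    show "{ennreal (a/2)..} \<subseteq> \<theta> ` {0..1}"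
    proof
      fix w assume w: "w \<in> {ennreal (a/2)..}"
      show "w \<in> \<theta> ` {0..1}"
      proof (cases w)
        case top
        then show ?thesis using th0 by force
      next
        case (real r)
        then have r: "a/2 \<le> r" using w a by simp
        define t where "t = exp (a/2 - r)"
        have t: "0 < t" "t \<le> 1" using r unfolding t_def by auto
        define x where "x = ?\<chi> t"
        have x: "x \<in> {0..1}" "\<phi> x = t" using sb_range[OF si, of t] sb_f_inv[OF s, of t] t
          unfolding x_def by auto
        have "\<theta> x = ennreal r" using x t unfolding \<theta>_def t_def by simp
        then show ?thesis using x real by force
      qed
    qed
  qed
  have thcont: "continuous_on {0..1} \<theta>"
    by (rule antimono_interval_cont) (use thmono thimg in auto)
  have manti: "m z' \<le> m z" if "z \<le> z'" for z z'
  proof (cases "z' = top")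
    case True then show ?thesis using mr[of z] by (simp add: m_def)
  next
    case False
    then have "z \<noteq> top" using that top.extremum_unique by fastforce
    moreover have "enn2real z \<le> enn2real z'" using enn2real_mono[OF that] False by (simp add: top.not_eq_extremum)
    moreover have "min 1 (exp (a - enn2real z')) \<le> min 1 (exp (a - enn2real z))"
      by (rule min.mono) (use calculation(2) in simp_all)
    ultimately show ?thesis using False unfolding m_def by simp
  qed
  have panti: "\<psi> z' \<le> \<psi> z" if "z \<le> z'" for z z'
    unfolding \<psi>_def using pa_props(3)[OF H mr mr manti[OF that]] .
  have prange: "\<psi> z \<in> {0..1}" for z unfolding \<psi>_def using pa_props(1)[OF H mr] .
  have pimg: "\<psi> ` UNIV = {0..1}"
  proof
    show "\<psi> ` UNIV \<subseteq> {0..1}" using prange by auto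
    show "{0..1} \<subseteq> \<psi> ` UNIV"
    proof
      fix w :: real assume w: "w \<in> {0..1}"
      have "H 0 = 0" "H 1 = 1" using pa_props(4)[OF H, of 1] pa_props(5)[OF H, of 0] by auto
      then have "H 0 \<le> w" "w \<le> H 1" using w by auto
      from IVT'[of H 0 w 1, OF this _ pa_props(2)[OF H]] obtain t where t: "0 \<le> t" "t \<le> 1" "H t = w" by auto
      show "w \<in> range \<psi>"
      proof (cases "t = 0")
        case True
        then have "\<psi> top = w" using t by (simp add: \<psi>_def m_def)
        then show ?thesis by force
      next
        case False
        then have t0: "0 < t" using t by simp
        have "ln t \<le> 0" using t0 t by simp
        then have "0 \<le> a - ln t" using a by linarith
        then have "m (ennreal (a - ln t)) = t" using t0 t by (simp add: m_def)
        then have "\<psi> (ennreal (a - ln t)) = w" using t by (simp add: \<psi>_def)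
        then show ?thesis by force
      qed
    qed
  qed
  have pcont: "continuous_on UNIV \<psi>"
    by (rule antimono_interval_cont) (use panti pimg in auto)
  have pam: "antimono \<psi>" by (rule antimonoI) (rule panti)
  have eq: "Ov x y = \<psi> (\<theta> x + \<theta> y)" if x: "x \<in> {0..1}" and y: "y \<in> {0..1}" for x y
  proof (cases "x = 0 \<or> y = 0")
    case True
    then have st: "\<theta> x + \<theta> y = top" using th0 by auto
    have p0: "\<phi> x * \<phi> y = 0" using True sb_0[OF s] by auto
    have "Ov x y = H (\<phi> x * \<phi> y)" using O x y by blast
    also have "\<dots> = H 0" by (simp only: p0)
    also have "\<dots> = \<psi> (\<theta> x + \<theta> y)" by (simp only: st) (simp add: \<psi>_def m_def)
    finally show ?thesis .
  next
    case False
    then have x0: "0 < x" and y0: "0 < y" using x y by auto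
    note fx = th_fin[OF x x0] and fy = th_fin[OF y y0]
    have nn: "0 \<le> a / 2 - ln (\<phi> x)" "0 \<le> a / 2 - ln (\<phi> y)" using fx(4) fy(4) a by linarith+
    have "\<theta> x + \<theta> y = ennreal (a / 2 - ln (\<phi> x) + (a / 2 - ln (\<phi> y)))"
      using fx(1) fy(1) ennreal_plus[OF nn] by simp
    also have "a / 2 - ln (\<phi> x) + (a / 2 - ln (\<phi> y)) = a - ln (\<phi> x) - ln (\<phi> y)" by simp
    finally have "\<theta> x + \<theta> y = ennreal (a - ln (\<phi> x) - ln (\<phi> y))" .
    moreover have "exp (ln (\<phi> x) + ln (\<phi> y)) = \<phi> x * \<phi> y" using fx fy by (simp add: exp_add)
    moreover have "\<phi> x * \<phi> y \<le> 1" using fx fy by (simp add: mult_le_one)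
    moreover have "0 \<le> a - ln (\<phi> x) - ln (\<phi> y)" using nn by linarith
    ultimately show ?thesis using O x y by (simp add: \<psi>_def m_def)
  qed
  have conda: "\<forall>x\<in>{0..1}. \<theta> x = ennreal (a / 2) \<longleftrightarrow> x = 1"
  proof
    fix x :: real assume x: "x \<in> {0..1}"
    show "\<theta> x = ennreal (a / 2) \<longleftrightarrow> x = 1"
    proof (cases "x = 0")
      case True then show ?thesis using th0 by simp
    next
      case False
      then have x0: "0 < x" using x by simp
      note fx = th_fin[OF x x0]
      have nn: "0 \<le> a / 2 - ln (\<phi> x)" "0 \<le> a / 2" using fx(4) a by linarith+
      have "\<theta> x = ennreal (a / 2) \<longleftrightarrow> a/2 - ln (\<phi> x) = a/2" using fx(1) ennreal_inj[OF nn] by simp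
      also have "\<dots> \<longleftrightarrow> \<phi> x = 1" using fx by simp
      also have "\<dots> \<longleftrightarrow> x = 1" using sb_eq_iff[OF s x, of 1] sb_1[OF s] by simp
      finally show ?thesis .
    qed
  qed
  show ?thesis
    apply (rule exI[of _ \<theta>], rule exI[of _ \<psi>])
    using thcont strict pcont pam prange eq C3_overlap[OF s H O] conda by blast
qed



lemma ov_props:
  fixes Ov :: "real \<Rightarrow> real \<Rightarrow> real"
  assumes "overlap Ov"
  shows "\<And>x y. x \<in> {0..1} \<Longrightarrow> y \<in> {0..1} \<Longrightarrow> Ov x y \<in> {0..1}"
    "\<And>x y. x \<in> {0..1} \<Longrightarrow> y \<in> {0..1} \<Longrightarrow> Ov x y = 0 \<longleftrightarrow> x * y = 0"
    "\<And>x y. x \<in> {0..1} \<Longrightarrow> y \<in> {0..1} \<Longrightarrow> Ov x y = 1 \<longleftrightarrow> x * y = 1"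
    "\<And>x x' y. x \<in> {0..1} \<Longrightarrow> x' \<in> {0..1} \<Longrightarrow> y \<in> {0..1} \<Longrightarrow> x \<le> x' \<Longrightarrow> Ov x y \<le> Ov x' y"
    "\<And>x x' y. x \<in> {0..1} \<Longrightarrow> x' \<in> {0..1} \<Longrightarrow> y \<in> {0..1} \<Longrightarrow> x \<le> x' \<Longrightarrow> Ov y x \<le> Ov y x'"
    "continuous_on ({0..1} \<times> {0..1}) (\<lambda>(x, y). Ov x y)"
  using assms unfolding overlap_def by blast+

lemma sq_one: "(v::real) \<in> {0..1} \<Longrightarrow> v * v = 1 \<longleftrightarrow> v = 1"
proof
  assume v: "v \<in> {0..1}" "v * v = 1"
  have "v * v \<le> v" using v(1) by (auto intro: mult_left_le_one_le)
  then show "v = 1" using v by auto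
qed simp

lemma C1_C3:
  fixes \<theta> :: "real \<Rightarrow> ennreal" and \<psi> :: "ennreal \<Rightarrow> real" and Ov :: "real \<Rightarrow> real \<Rightarrow> real"
  assumes thc: "continuous_on {0..1} \<theta>" and ths: "\<forall>x\<in>{0..1}. \<forall>y\<in>{0..1}. x < y \<longrightarrow> \<theta> y < \<theta> x"
    and eq: "\<forall>x\<in>{0..1}. \<forall>y\<in>{0..1}. Ov x y = \<psi> (\<theta> x + \<theta> y)" and ov: "overlap Ov"
  shows "\<exists>\<phi> H. bij_betw \<phi> {0..1} {0..1} \<and> strict_mono_on {0..1} \<phi> \<and>
              pseudo_automorphism H \<and>
              (\<forall>x\<in>{0..1}. \<forall>y\<in>{0..1}. Ov x y = H (\<phi> x * \<phi> y))"
proof -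
  note ovp = ov_props[OF ov]
  have t10: "\<theta> 1 < \<theta> 0" using ths by auto
  have Ov01: "Ov 0 1 = 0" using ovp(2)[of 0 1] by simp
  have th0: "\<theta> 0 = top"
  proof (rule ccontr)
    assume ntop: "\<theta> 0 \<noteq> top"
    obtain A where A: "0 \<le> A" "\<theta> 0 = ennreal A" using ntop by (cases "\<theta> 0") auto
    obtain B where B: "0 \<le> B" "\<theta> 1 = ennreal B" using t10 by (cases "\<theta> 1") auto
    have BA: "B < A" using t10 A B by (simp add: ennreal_less_iff)
    define M where "M = ennreal ((A + B) / 2)"
    have "\<theta> 1 \<le> M" "M \<le> \<theta> 0" using A B BA unfolding M_def by (auto intro: ennreal_leI)
    from IVT2'[of \<theta> 1 M 0, OF this _ thc] obtain x where x: "0 \<le> x" "x \<le> 1" "\<theta> x = M" by auto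
    have "x \<noteq> 0"
    proof
      assume "x = 0"
      then have "ennreal ((A + B) / 2) = ennreal A" using x A unfolding M_def by simp
      then show False using A B BA by (simp add: ennreal_inj)
    qed
    have "M + M = ennreal (A + B)" unfolding M_def
      using ennreal_plus[of "(A + B) / 2" "(A + B) / 2"] A B by simp
    also have "\<dots> = \<theta> 0 + \<theta> 1" using A B by simp
    finally have "Ov x x = Ov 0 1" using eq x by simp
    then have "x * x = 0" using Ov01 ovp(2)[of x x] x by simp
    then show False using \<open>x \<noteq> 0\<close> by simp
  qed
  have ge1: "\<theta> 1 \<le> \<theta> x" if "x \<in> {0..1}" for x
    using ths that by (cases "x = 1") (auto intro: less_imp_le)
  have fin: "\<theta> x < top" if "x \<in> {0..1}" "0 < x" for x
    using ths that th0 by fastforce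
  define C where "C = enn2real (\<theta> 1)"
  define E where "E x = enn2real (\<theta> x)" for x
  have C0: "0 \<le> C" unfolding C_def by simp
  have thE: "\<theta> x = ennreal (E x)" "C \<le> E x" "0 \<le> E x" if "x \<in> {0..1}" "0 < x" for x
  proof -
    show "\<theta> x = ennreal (E x)" unfolding E_def using fin[OF that] by simp
    show "C \<le> E x" unfolding C_def E_def using enn2real_mono[OF ge1[OF that(1)] fin[OF that]] .
    show "0 \<le> E x" unfolding E_def by simp
  qed
  have th1: "\<theta> 1 = ennreal C" using thE(1)[of 1] unfolding C_def E_def by simp
  define \<phi> where "\<phi> x = (if x = 0 then 0 else exp (C - E x))" for x
  have smono: "strict_mono_on {0..1} \<phi>"
  proof (rule strict_mono_onI)
    fix x y :: real assume x: "x \<in> {0..1}" and y: "y \<in> {0..1}" and xy: "x < y"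
    show "\<phi> x < \<phi> y"
    proof (cases "x = 0")
      case True then show ?thesis using xy by (simp add: \<phi>_def)
    next
      case False
      then have x0: "0 < x" using x by simp
      have y0: "0 < y" using x0 xy by simp
      have "\<theta> y < \<theta> x" using ths x y xy by blast
      then have "E y < E x" using thE[OF x x0] thE[OF y y0] by (simp add: ennreal_less_iff)
      then show ?thesis using x0 y0 by (simp add: \<phi>_def)
    qed
  qed
  have img: "\<phi> ` {0..1} = {0..1}"
  proof
    show "\<phi> ` {0..1} \<subseteq> {0..1}"
    proof
      fix z assume "z \<in> \<phi> ` {0..1}"
      then obtain x where x: "x \<in> {0..1}" "z = \<phi> x" by auto
      show "z \<in> {0..1}"
      proof (cases "x = 0")
        case False
        then have "C \<le> E x" using thE x by simp
        then show ?thesis using x False by (simp add: \<phi>_def)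
      qed (use x in \<open>simp add: \<phi>_def\<close>)
    qed
    show "{0..1} \<subseteq> \<phi> ` {0..1}"
    proof
      fix z :: real assume z: "z \<in> {0..1}"
      show "z \<in> \<phi> ` {0..1}"
      proof (cases "z = 0")
        case True
        then show ?thesis by (auto simp: \<phi>_def image_iff intro!: bexI[of _ 0])
      next
        case False
        then have z0: "0 < z" "z \<le> 1" using z by auto
        have lz: "ln z \<le> 0" using z0 by simp
        define v where "v = ennreal (C - ln z)"
        have "\<theta> 1 \<le> v" "v \<le> \<theta> 0" unfolding v_def th1 using lz C0 th0 by (auto intro: ennreal_leI)
        from IVT2'[of \<theta> 1 v 0, OF this _ thc] obtain x where x: "0 \<le> x" "x \<le> 1" "\<theta> x = v" by auto
        have x0: "x \<noteq> 0" using x th0 unfolding v_def by auto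
        then have "E x = C - ln z" using x lz C0 unfolding E_def v_def by simp
        then have "\<phi> x = z" using x0 z0 by (simp add: \<phi>_def)
        then show ?thesis using x by force
      qed
    qed
  qed
  have s: "sb \<phi>" unfolding sb_def bij_betw_def using smono img strict_mono_on_imp_inj_on by blast
  have thphi: "\<theta> x = ennreal (C - ln (\<phi> x))" "0 \<le> C - ln (\<phi> x)" "0 < \<phi> x"
    if "x \<in> {0..1}" "0 < x" for x
  proof -
    have "ln (\<phi> x) = C - E x" using that by (simp add: \<phi>_def)
    then show "\<theta> x = ennreal (C - ln (\<phi> x))" "0 \<le> C - ln (\<phi> x)" using thE[OF that] by simp_all
    show "0 < \<phi> x" using that by (simp add: \<phi>_def)
  qed
  let ?\<chi> = "inv_into {0..1} \<phi>"
  have si: "sb ?\<chi>" using sb_inv[OF s] .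
  define u where "u t = ?\<chi> (sqrt t)" for t
  define H where "H t = Ov (u t) (u t)" for t
  have ur: "u t \<in> {0..1}" if "t \<in> {0..1}" for t
    unfolding u_def using sb_range[OF si] that by simp
  have ucont: "continuous_on {0..1} u"
    unfolding u_def by (rule continuous_on_compose2[OF sb_cont[OF si]]) (auto intro: continuous_intros)
  have u1: "u t = 1 \<longleftrightarrow> t = 1" if "t \<in> {0..1}" for t
    using sb_eq_iff[OF si, of "sqrt t" 1] sb_1[OF si] that unfolding u_def by simp
  have u0: "u t = 0 \<longleftrightarrow> t = 0" if "t \<in> {0..1}" for t
    using sb_eq_iff[OF si, of "sqrt t" 0] sb_0[OF si] that unfolding u_def by simp
  have pa: "pseudo_automorphism H"
    unfolding pseudo_automorphism_def
  proof (intro conjI ballI)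
    fix t :: real assume t: "t \<in> {0..1}"
    show "H t \<in> {0..1}" unfolding H_def using ovp(1) ur[OF t] by blast
    show "H t = 1 \<longleftrightarrow> t = 1" unfolding H_def using ovp(3)[OF ur[OF t] ur[OF t]] sq_one[OF ur[OF t]] u1[OF t] by simp
    show "H t = 0 \<longleftrightarrow> t = 0" unfolding H_def using ovp(2)[OF ur[OF t] ur[OF t]] u0[OF t] by simp
  next
    have "continuous_on {0..1} (\<lambda>t. (\<lambda>(x, y). Ov x y) (u t, u t))"
      by (rule continuous_on_compose2[OF ovp(6)]) (use ucont ur in \<open>auto intro: continuous_on_Pair\<close>)
    then show "continuous_on {0..1} H" unfolding H_def by simp
    show "mono_on {0..1} H"
    proof (rule mono_onI)
      fix t t' :: real assume t: "t \<in> {0..1}" and t': "t' \<in> {0..1}" and le: "t \<le> t'"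
      have "u t \<le> u t'" unfolding u_def using sb_le_iff[OF si, of "sqrt t" "sqrt t'"] t t' le by simp
      then show "H t \<le> H t'" unfolding H_def
        using ovp(4)[OF ur[OF t] ur[OF t'] ur[OF t]] ovp(5)[OF ur[OF t] ur[OF t'] ur[OF t']] by simp
    qed
  qed
  have rep: "Ov x y = H (\<phi> x * \<phi> y)" if x: "x \<in> {0..1}" and y: "y \<in> {0..1}" for x y
  proof -
    define p where "p = \<phi> x * \<phi> y"
    have p: "p \<in> {0..1}" unfolding p_def using prod_range[OF s x y] .
    define w where "w = u p"
    have w: "w \<in> {0..1}" "\<phi> w = sqrt p" unfolding w_def u_def
      using sb_range[OF si, of "sqrt p"] sb_f_inv[OF s, of "sqrt p"] p by auto
    show ?thesis
    proof (cases "x = 0 \<or> y = 0")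
      case True
      then have "p = 0" unfolding p_def using sb_0[OF s] by auto
      then have "w = 0" unfolding w_def u_def using sb_0[OF si] by simp
      then show ?thesis using True ovp(2)[OF x y] ovp(2)[of 0 0] \<open>p = 0\<close> unfolding H_def w_def p_def by auto
    next
      case False
      then have x0: "0 < x" and y0: "0 < y" using x y by auto
      note fx = thphi[OF x x0] and fy = thphi[OF y y0]
      have p0: "0 < p" unfolding p_def using fx fy by simp
      have w0: "0 < w"
      proof (rule ccontr)
        assume "\<not> 0 < w" then have "w = 0" using w by simp
        then show False using w sb_0[OF s] p0 by simp
      qed
      note fw = thphi[OF w(1) w0]
      have lw: "ln (\<phi> w) = (ln (\<phi> x) + ln (\<phi> y)) / 2"
        using w(2) p0 fx fy unfolding p_def by (simp add: ln_sqrt ln_mult)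
      have "\<theta> x + \<theta> y = ennreal (C - ln (\<phi> x) + (C - ln (\<phi> y)))"
        using fx fy ennreal_plus[of "C - ln (\<phi> x)" "C - ln (\<phi> y)"] by simp
      also have "C - ln (\<phi> x) + (C - ln (\<phi> y)) = C - ln (\<phi> w) + (C - ln (\<phi> w))" using lw by simp
      also have "ennreal \<dots> = \<theta> w + \<theta> w"
        using fw ennreal_plus[of "C - ln (\<phi> w)" "C - ln (\<phi> w)"] by simp
      finally have "Ov x y = Ov w w" using eq x y w(1) by simp
      then show ?thesis unfolding H_def w_def p_def .
    qed
  qed
  show ?thesis using s pa rep unfolding sb_def by blast
qed


theorem theorem5p1:
  fixes a :: real and Ov :: "real \<Rightarrow> real \<Rightarrow> real"
  assumes "a \<ge> 0"
  defines "C1 \<equiv> (\<exists>(\<theta>::real \<Rightarrow> ennreal) (\<psi>::ennreal \<Rightarrow> real).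
              continuous_on {0..1} \<theta> \<and>
              (\<forall>x\<in>{0..1}. \<forall>y\<in>{0..1}. x < y \<longrightarrow> \<theta> y < \<theta> x) \<and>
              continuous_on UNIV \<psi> \<and> antimono \<psi> \<and> (\<forall>z. \<psi> z \<in> {0..1}) \<and>
              (\<forall>x\<in>{0..1}. \<forall>y\<in>{0..1}. Ov x y = \<psi> (\<theta> x + \<theta> y)) \<and>
              overlap Ov \<and>
              ((\<forall>x\<in>{0..1}. \<theta> x = ennreal (a / 2) \<longleftrightarrow> x = 1) \<or>
               (\<forall>z. \<psi> z = 1 \<longleftrightarrow> z \<le> ennreal a)))"
    and "C2 \<equiv> overlap Ov \<and> (\<exists>F T. pseudo_automorphism F \<and> strict_tnorm T \<and>
              (\<forall>x\<in>{0..1}. \<forall>y\<in>{0..1}. Ov x y = F (T x y)))"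
    and "C3 \<equiv> (\<exists>\<phi> H. bij_betw \<phi> {0..1} {0..1} \<and> strict_mono_on {0..1} \<phi> \<and>
              pseudo_automorphism H \<and>
              (\<forall>x\<in>{0..1}. \<forall>y\<in>{0..1}. Ov x y = H (\<phi> x * \<phi> y)))"
  shows "(C1 \<longleftrightarrow> C2) \<and> (C2 \<longleftrightarrow> C3)"
proof -
  have c13: "C1 \<Longrightarrow> C3"
  proof -
    assume "C1"
    then obtain \<theta> :: "real \<Rightarrow> ennreal" and \<psi> :: "ennreal \<Rightarrow> real" where
      h: "continuous_on {0..1} \<theta>" "\<forall>x\<in>{0..1}. \<forall>y\<in>{0..1}. x < y \<longrightarrow> \<theta> y < \<theta> x"
         "\<forall>x\<in>{0..1}. \<forall>y\<in>{0..1}. Ov x y = \<psi> (\<theta> x + \<theta> y)" "overlap Ov"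
      unfolding assms(2) by blast
    show "C3" unfolding assms(4) using C1_C3[OF h] .
  qed
  have c3: "C3 \<Longrightarrow> C1 \<and> C2"
  proof -
    assume "C3"
    then obtain \<phi> H where s: "sb \<phi>" and H: "pseudo_automorphism H"
      and O: "\<forall>x\<in>{0..1}. \<forall>y\<in>{0..1}. Ov x y = H (\<phi> x * \<phi> y)"
      unfolding assms(4) sb_def by blast
    show "C1 \<and> C2" unfolding assms(2) assms(3) using C3_C1[OF assms(1) s H O] C3_C2[OF s H O] by blast
  qed
  have c23: "C2 \<Longrightarrow> C3"
  proof -
    assume "C2"
    then obtain F T where F: "pseudo_automorphism F" and T: "strict_tnorm T"
      and O: "\<forall>x\<in>{0..1}. \<forall>y\<in>{0..1}. Ov x y = F (T x y)"
      unfolding assms(3) by blast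
    show "C3" unfolding assms(4) using C2_C3[OF F T O] .
  qed
  show ?thesis using c13 c3 c23 by blast
qed

end
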